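(* Let $b\ge1$ and $1\le a\le b$ be integers, and put $s=\tfrac{2a-1}{2}$. Let $V:\mathbb{C}^2\to\mathcal{H}_j$ be the encoding isometry of a spin code that is $(\mathsf{BD}_{2b},\delta_a)$-covariant, i.e. $D^j(g)V=V\delta_a(g)$ for all $g\in\mathsf{BD}_{2b}$, and let $|\bar0\rangle=V|0\rangle$, $|\bar1\rangle=V|1\rangle$. Then $\operatorname{supp}|\bar0\rangle\subset s+2b\mathbb{Z}$ and $\operatorname{supp}|\bar1\rangle=-\operatorname{supp}|\bar0\rangle$.
   Context: $\mathcal{H}_j$ is the spin-$j$ irrep of $\mathrm{SU}(2)$ with $J_z$-eigenbasis $|j,m\rangle$, $|m|\le j$, and $D^j(g)$ the action of $g$; in particular $D^j(\mathsf{Ph}(\alpha))|j,m\rangle=e^{-i\alpha m}|j,m\rangle$ and $D^j(\mathsf{X})|j,m\rangle=e^{-i\pi j}|j,-m\rangle$. For $|\psi\rangle=\sum_m\alpha_m|j,m\rangle$, $\operatorname{supp}|\psi\rangle=\{m:\alpha_m\ne0\}$. Here $\mathsf{X}=\begin{pmatrix}0&-i\\-i&0\end{pmatrix}$, $\mathsf{Z}=\begin{pmatrix}-i&0\\0&i\end{pmatrix}$, $\mathsf{Ph}(\alpha)=\mathrm{diag}(e^{-i\alpha/2},e^{i\alpha/2})$, and $\mathsf{BD}_{2b}=\langle\mathsf{X},\mathsf{Z},\mathsf{Ph}(\pi/b)\rangle$ (binary dihedral group of order $8b$). For $1\le a\le b$, $\delta_a$ is the two-dimensional irreducible representation of $\mathsf{BD}_{2b}$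 with $\delta_a(\mathsf{X})=\mathsf{X}$ and $\delta_a(\mathsf{Ph}(\pi/b))=\mathsf{Ph}(\pi/b)^{2a-1}$. *)

theory Defs
  imports "HOL-Analysis.Analysis"
begin

text \<open>Spin-j irrep H_j: a state is given by its coefficient function m -> alpha_m
  on the J_z-eigenbasis |j,m>, where m ranges over {-j, -j+1, ..., j}.\<close>

definition spin_ms :: "real \<Rightarrow> real set" where
  "spin_ms j = {m. \<exists>k::nat. real k \<le> 2 * j \<and> m = real k - j}"

definition spin_space :: "real \<Rightarrow> (real \<Rightarrow> complex) set" where
  "spin_space j = {\<psi>. \<forall>m. m \<notin> spin_ms j \<longrightarrow> \<psi> m = 0}"

definition spin_inner :: "real \<Rightarrow> (real \<Rightarrow> complex) \<Rightarrow> (real \<Rightarrow> complex) \<Rightarrow> complex" where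
  "spin_inner j \<psi> \<phi> = (\<Sum>m\<in>spin_ms j. cnj (\<psi> m) * \<phi> m)"

definition supp :: "(real \<Rightarrow> complex) \<Rightarrow> real set" where
  "supp \<psi> = {m. \<psi> m \<noteq> 0}"

definition D_Ph :: "real \<Rightarrow> real \<Rightarrow> (real \<Rightarrow> complex) \<Rightarrow> (real \<Rightarrow> complex)" where
  "D_Ph j \<alpha> \<psi> = (\<lambda>m. exp (- \<i> * complex_of_real (\<alpha> * m)) * \<psi> m)"

definition D_X :: "real \<Rightarrow> (real \<Rightarrow> complex) \<Rightarrow> (real \<Rightarrow> complex)" where
  "D_X j \<psi> = (\<lambda>m. exp (- \<i> * complex_of_real (pi * j)) * \<psi> (- m))"

definition Ph_mat :: "real \<Rightarrow> complex^2^2" where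
  "Ph_mat \<alpha> = (\<chi> r c. if r = c then (if r = 1 then exp (- \<i> * complex_of_real (\<alpha> / 2))
                                          else exp (\<i> * complex_of_real (\<alpha> / 2))) else 0)"

definition X_mat :: "complex^2^2" where
  "X_mat = (\<chi> r c. if r = c then 0 else - \<i>)"

definition encode :: "(real \<Rightarrow> complex) \<Rightarrow> (real \<Rightarrow> complex) \<Rightarrow> complex^2 \<Rightarrow> (real \<Rightarrow> complex)" where
  "encode c0 c1 x = (\<lambda>m. x $ 1 * c0 m + x $ 2 * c1 m)"

text \<open>V is an isometry iff its columns are orthonormal.\<close>

definition is_isometry_code :: "real \<Rightarrow> (real \<Rightarrow> complex) \<Rightarrow> (real \<Rightarrow> complex) \<Rightarrow> bool" where
  "is_isometry_code j c0 c1 \<longleftrightarrow> c0 \<in> spin_space j \<and> c1 \<in> spin_space j \<and>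
     spin_inner j c0 c0 = 1 \<and> spin_inner j c1 c1 = 1 \<and> spin_inner j c0 c1 = 0"

text \<open>BD_{2b} = <X, Z, Ph(pi/b)> consists exactly of the elements Ph(k pi/b) and
  X Ph(k pi/b), k in Z (Z = Ph(pi)).  D^j is a homomorphism, so
  D^j(X Ph(alpha)) = D^j(X) D^j(Ph(alpha)); and delta_a(Ph(k pi/b)) = Ph(pi/b)^((2a-1)k)
  = Ph((2a-1) k pi/b), delta_a(X Ph(k pi/b)) = X Ph((2a-1) k pi/b).\<close>

definition BD_covariant :: "real \<Rightarrow> nat \<Rightarrow> nat \<Rightarrow> (complex^2 \<Rightarrow> (real \<Rightarrow> complex)) \<Rightarrow> bool" where
  "BD_covariant j b a V \<longleftrightarrow>
     (\<forall>k::int. \<forall>x::complex^2.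
        D_Ph j (real_of_int k * pi / real b) (V x)
          = V (Ph_mat ((2 * real a - 1) * real_of_int k * pi / real b) *v x)
      \<and> D_X j (D_Ph j (real_of_int k * pi / real b) (V x))
          = V ((X_mat ** Ph_mat ((2 * real a - 1) * real_of_int k * pi / real b)) *v x))"

end

theory Submission
  imports Defs
begin

theorem lemma1:
  fixes b a :: nat and j :: real and c0 c1 :: "real \<Rightarrow> complex"
  assumes "1 \<le> b" and "1 \<le> a" and "a \<le> b"
    and "2 * j \<in> \<nat>"
    and "is_isometry_code j c0 c1"
    and "BD_covariant j b a (encode c0 c1)"
  shows "supp c0 \<subseteq> {(2 * real a - 1) / 2 + 2 * real b * real_of_int z | z. True}
    \<and> supp c1 = uminus ` supp c0"
proof -
  define e1 :: "complex^2" where "e1 = (\<chi> i. if i = 1 then 1 else 0)"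
  define \<alpha> where "\<alpha> = (2 * real a - 1) * real_of_int 1 * pi / real b"
  have bpos: "real b > 0" using assms(1) by simp
  have enc: "encode c0 c1 e1 = c0" unfolding encode_def e1_def by simp
  have cov1: "D_Ph j (real_of_int 1 * pi / real b) (encode c0 c1 e1)
          = encode c0 c1 (Ph_mat \<alpha> *v e1)"
    using assms(6) unfolding BD_covariant_def \<alpha>_def by blast
  have cov2: "D_X j (D_Ph j (real_of_int 0 * pi / real b) (encode c0 c1 e1))
          = encode c0 c1 ((X_mat ** Ph_mat ((2 * real a - 1) * real_of_int 0 * pi / real b)) *v e1)"
    using assms(6) unfolding BD_covariant_def by blast
  have Ph1: "Ph_mat \<alpha> *v e1 = (\<chi> i. if i = 1 then exp (- \<i> * complex_of_real (\<alpha> / 2)) else 0)"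
    unfolding Ph_mat_def e1_def matrix_vector_mult_def
    by (simp add: vec_eq_iff sum_2 forall_2)
  have E1: "encode c0 c1 (Ph_mat \<alpha> *v e1) = (\<lambda>m. exp (- \<i> * complex_of_real (\<alpha> / 2)) * c0 m)"
    unfolding Ph1 encode_def by simp
  have X0: "(X_mat ** Ph_mat ((2 * real a - 1) * real_of_int 0 * pi / real b)) *v e1
      = (\<chi> i. if i = 1 then 0 else - \<i>)"
    unfolding Ph_mat_def X_mat_def e1_def matrix_vector_mult_def matrix_matrix_mult_def
    by (simp add: vec_eq_iff sum_2 forall_2)
  have E2: "encode c0 c1 ((X_mat ** Ph_mat ((2 * real a - 1) * real_of_int 0 * pi / real b)) *v e1)
     = (\<lambda>m. - \<i> * c1 m)"
    unfolding X0 encode_def by simp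
  have c1eq: "\<And>m. exp (- \<i> * complex_of_real (pi * j)) * c0 (- m) = - \<i> * c1 m"
  proof -
    fix m
    have "D_X j (D_Ph j (real_of_int 0 * pi / real b) c0) = (\<lambda>m. - \<i> * c1 m)"
      using cov2 unfolding E2 enc .
    then have "D_X j (D_Ph j (real_of_int 0 * pi / real b) c0) m = - \<i> * c1 m"
      by simp
    then show "exp (- \<i> * complex_of_real (pi * j)) * c0 (- m) = - \<i> * c1 m"
      unfolding D_X_def D_Ph_def by simp
  qed
  have part2: "supp c1 = uminus ` supp c0"
  proof -
    have "\<And>m. c1 m \<noteq> 0 \<longleftrightarrow> c0 (- m) \<noteq> 0"
    proof -
      fix m
      have "c1 m = \<i> * (exp (- \<i> * complex_of_real (pi * j)) * c0 (- m))"
        using c1eq[of m] by (simp add: algebra_simps)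
      then show "c1 m \<noteq> 0 \<longleftrightarrow> c0 (- m) \<noteq> 0" by simp
    qed
    then show ?thesis unfolding supp_def
      by (force intro: image_eqI[where x="- _"])
  qed
  have part1: "supp c0 \<subseteq> {(2 * real a - 1) / 2 + 2 * real b * real_of_int z | z. True}"
  proof
    fix m assume "m \<in> supp c0"
    then have nz: "c0 m \<noteq> 0" unfolding supp_def by simp
    have "exp (- \<i> * complex_of_real (real_of_int 1 * pi / real b * m)) * c0 m
        = exp (- \<i> * complex_of_real (\<alpha> / 2)) * c0 m"
    proof -
      have "D_Ph j (real_of_int 1 * pi / real b) c0 = (\<lambda>m. exp (- \<i> * complex_of_real (\<alpha> / 2)) * c0 m)"
        using cov1 unfolding E1 enc .
      then show ?thesis unfolding D_Ph_def by metis
    qed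
    then have h: "exp (- \<i> * complex_of_real (pi / real b * m)) = exp (- \<i> * complex_of_real (\<alpha> / 2))"
      using nz by simp
    have "exp (- \<i> * complex_of_real (pi / real b * m) - (- \<i> * complex_of_real (\<alpha> / 2))) = 1"
      unfolding exp_diff h by simp
    then obtain n :: int where n: "- (pi / real b * m) + \<alpha> / 2 = of_int (2 * n) * pi"
      unfolding exp_eq_1 by auto
    have "m = (2 * real a - 1) / 2 + 2 * real b * real_of_int (- n)"
    proof -
      have "- (pi * m) + pi * (2 * real a - 1) / 2 = real b * (of_int (2 * n) * pi)"
      proof -
        have "real b * (- (pi / real b * m) + \<alpha> / 2) = real b * (of_int (2 * n) * pi)"
          using n by simp
        moreover have "real b * (- (pi / real b * m) + \<alpha> / 2) = - (pi * m) + pi * (2 * real a - 1) / 2"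
        proof -
          have e1: "real b * (pi / real b * m) = pi * m" using bpos by simp
          have e2: "real b * (\<alpha> / 2) = pi * (2 * real a - 1) / 2"
            using bpos unfolding \<alpha>_def by simp
          show ?thesis unfolding distrib_left mult_minus_right e1 e2 by simp
        qed
        ultimately show ?thesis by metis
      qed
      then have "pi * (- m + (2 * real a - 1) / 2 - 2 * real_of_int n * real b) = 0"
        by (simp add: algebra_simps)
      then have z: "- m + (2 * real a - 1) / 2 - 2 * real_of_int n * real b = 0"
        by simp
      have "2 * real b * real_of_int (- n) = - (2 * real_of_int n * real b)" by simp
      then show ?thesis using z by linarith
    qed
    then show "m \<in> {(2 * real a - 1) / 2 + 2 * real b * real_of_int z | z. True}" by blast
  qed
  show ?thesis using part1 part2 by blast
qed

end
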